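(* Let $G$ be a triangle-free graph on $n\ge1$ vertices and $\lambda>0$. Let $I$ be drawn from the hard-core model on $G$ at fugacity $\lambda$ and, independently, let $v$ be a uniformly random vertex of $G$. Let $Z$ be the number of neighbors $u$ of $v$ that are uncovered, i.e. satisfy $N(u)\cap I=\emptyset$. Then \[ \frac1n\overline\alpha_G(\lambda)=\frac{\lambda}{1+\lambda}\,\mathbb E\big[(1+\lambda)^{-Z}\big]. \] Moreover, if $G$ has maximum degree $d\ge1$, then $\frac1n\overline\alpha_G(\lambda)\ge\frac{\lambda}{1+\lambda}\frac{\mathbb E Z}{d}$, with equality if $G$ is $d$-regular.
   Context: The hard-core model at fugacity $\lambda>0$ on $G$ is the distribution $\Pr[I]=\lambda^{|I|}/P_G(\lambda)$ on independent sets $I$ of $G$, with $P_G(\lambda)=\sum_{J}\lambda^{|J|}$ over all independent sets $J$. $\overline{\alpha}_G(\lambda)=\mathbb E|I|$. $N(u)$ denotes the set of neighbors of $u$. *)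

theory Defs
  imports Complex_Main
begin

definition simple_graph :: "'a set \<Rightarrow> ('a \<Rightarrow> 'a \<Rightarrow> bool) \<Rightarrow> bool" where
  "simple_graph V E \<longleftrightarrow> finite V \<and> (\<forall>x y. E x y \<longrightarrow> E y x)
     \<and> (\<forall>x. \<not> E x x) \<and> (\<forall>x y. E x y \<longrightarrow> x \<in> V \<and> y \<in> V)"

definition triangle_free :: "'a set \<Rightarrow> ('a \<Rightarrow> 'a \<Rightarrow> bool) \<Rightarrow> bool" where
  "triangle_free V E \<longleftrightarrow> \<not> (\<exists>x\<in>V. \<exists>y\<in>V. \<exists>z\<in>V. E x y \<and> E y z \<and> E x z)"

definition nbrs :: "'a set \<Rightarrow> ('a \<Rightarrow> 'a \<Rightarrow> bool) \<Rightarrow> 'a \<Rightarrow> 'a set" where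
  "nbrs V E u = {w \<in> V. E u w}"

definition degree :: "'a set \<Rightarrow> ('a \<Rightarrow> 'a \<Rightarrow> bool) \<Rightarrow> 'a \<Rightarrow> nat" where
  "degree V E u = card (nbrs V E u)"

definition max_degree :: "'a set \<Rightarrow> ('a \<Rightarrow> 'a \<Rightarrow> bool) \<Rightarrow> nat" where
  "max_degree V E = Max (degree V E ` V)"

definition regular :: "'a set \<Rightarrow> ('a \<Rightarrow> 'a \<Rightarrow> bool) \<Rightarrow> nat \<Rightarrow> bool" where
  "regular V E d \<longleftrightarrow> (\<forall>v\<in>V. degree V E v = d)"

definition independent :: "'a set \<Rightarrow> ('a \<Rightarrow> 'a \<Rightarrow> bool) \<Rightarrow> 'a set \<Rightarrow> bool" where
  "independent V E I \<longleftrightarrow> I \<subseteq> V \<and> (\<forall>x\<in>I. \<forall>y\<in>I. \<not> E x y)"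

definition indep_sets :: "'a set \<Rightarrow> ('a \<Rightarrow> 'a \<Rightarrow> bool) \<Rightarrow> 'a set set" where
  "indep_sets V E = {I. independent V E I}"

definition partition_fn :: "'a set \<Rightarrow> ('a \<Rightarrow> 'a \<Rightarrow> bool) \<Rightarrow> real \<Rightarrow> real" where
  "partition_fn V E lam = (\<Sum>J\<in>indep_sets V E. lam ^ card J)"

definition hc_prob :: "'a set \<Rightarrow> ('a \<Rightarrow> 'a \<Rightarrow> bool) \<Rightarrow> real \<Rightarrow> 'a set \<Rightarrow> real" where
  "hc_prob V E lam I = lam ^ card I / partition_fn V E lam"

definition alpha_bar :: "'a set \<Rightarrow> ('a \<Rightarrow> 'a \<Rightarrow> bool) \<Rightarrow> real \<Rightarrow> real" where
  "alpha_bar V E lam = (\<Sum>I\<in>indep_sets V E. hc_prob V E lam I * real (card I))"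

definition uncovered_nbrs :: "'a set \<Rightarrow> ('a \<Rightarrow> 'a \<Rightarrow> bool) \<Rightarrow> 'a set \<Rightarrow> 'a \<Rightarrow> nat" where
  "uncovered_nbrs V E I v = card {u \<in> nbrs V E v. nbrs V E u \<inter> I = {}}"

definition joint_expect ::
  "'a set \<Rightarrow> ('a \<Rightarrow> 'a \<Rightarrow> bool) \<Rightarrow> real \<Rightarrow> ('a set \<Rightarrow> 'a \<Rightarrow> real) \<Rightarrow> real" where
  "joint_expect V E lam f =
     (\<Sum>I\<in>indep_sets V E. \<Sum>v\<in>V. hc_prob V E lam I * (1 / real (card V)) * f I v)"

end

theory Submission
  imports Defs
begin

lemma sum_pow_card:
  assumes "finite A"
  shows "(\<Sum>S\<in>Pow A. (x::real) ^ card S) = (1 + x) ^ card A"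
proof -
  have "(\<Prod>a\<in>A. x + 1) = (\<Sum>X\<in>Pow A. (\<Prod>a\<in>X. x) * (\<Prod>a\<in>A-X. 1))"
    by (rule prod_add[OF assms])
  then show ?thesis by (simp add: add.commute)
qed

context
  fixes V :: "'a set" and E :: "'a \<Rightarrow> 'a \<Rightarrow> bool" and lam :: real
  assumes G: "simple_graph V E" and lpos: "lam > 0"
begin

lemma finV: "finite V" using G unfolding simple_graph_def by auto
lemma symE: "E x y \<Longrightarrow> E y x" using G unfolding simple_graph_def by auto
lemma irrE: "\<not> E x x" using G unfolding simple_graph_def by auto
lemma inV: "E x y \<Longrightarrow> x \<in> V \<and> y \<in> V" using G unfolding simple_graph_def by auto

lemma fin_indep: "finite (indep_sets V E)"
proof -
  have "indep_sets V E \<subseteq> Pow V" unfolding indep_sets_def independent_def by auto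
  then show ?thesis using finV finite_subset by blast
qed

lemma indep_fin: "I \<in> indep_sets V E \<Longrightarrow> finite I \<and> I \<subseteq> V"
  using finV finite_subset unfolding indep_sets_def independent_def by auto

lemma P_pos: "partition_fn V E lam > 0"
proof -
  have "{} \<in> indep_sets V E" unfolding indep_sets_def independent_def by auto
  then show ?thesis unfolding partition_fn_def
    using fin_indep lpos by (intro sum_pos) auto
qed

definition AA where "AA v = (\<Sum>I\<in>{I\<in>indep_sets V E. v \<in> I}. lam ^ card I)"
definition BB where "BB v = (\<Sum>I\<in>{I\<in>indep_sets V E. nbrs V E v \<inter> I = {}}. lam ^ card I)"
definition CC where "CC v = (\<Sum>I\<in>{I\<in>indep_sets V E. v \<notin> I \<and> nbrs V E v \<inter> I = {}}. lam ^ card I)"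

lemma alpha_eq: "alpha_bar V E lam = (\<Sum>v\<in>V. AA v) / partition_fn V E lam"
proof -
  have "alpha_bar V E lam = (\<Sum>I\<in>indep_sets V E. lam ^ card I * real (card I)) / partition_fn V E lam"
    unfolding alpha_bar_def hc_prob_def by (simp add: sum_divide_distrib)
  also have "(\<Sum>I\<in>indep_sets V E. lam ^ card I * real (card I))
      = (\<Sum>I\<in>indep_sets V E. \<Sum>v\<in>V. if v \<in> I then lam ^ card I else 0)"
  proof (rule sum.cong[OF refl])
    fix I assume "I \<in> indep_sets V E"
    then have I: "I \<subseteq> V" using indep_fin by auto
    have VI: "V \<inter> I = I" using I by auto
    show "lam ^ card I * real (card I) = (\<Sum>v\<in>V. if v \<in> I then lam ^ card I else 0)"
      using finV by (simp add: sum.If_cases VI)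
  qed
  also have "\<dots> = (\<Sum>v\<in>V. AA v)"
    unfolding AA_def using fin_indep by (subst sum.swap) (simp add: sum.inter_filter)
  finally show ?thesis .
qed

lemma A_C: assumes vV: "v \<in> V" shows "AA v = lam * CC v"
proof -
  let ?C = "{I\<in>indep_sets V E. v \<notin> I \<and> nbrs V E v \<inter> I = {}}"
  have inj: "inj_on (insert v) ?C"
  proof (rule inj_onI)
    fix x y assume "x \<in> ?C" "y \<in> ?C" "insert v x = insert v y"
    then have "v \<notin> x" "v \<notin> y" "insert v x = insert v y" by auto
    then show "x = y" by (metis Diff_insert_absorb)
  qed
  have img: "insert v ` ?C = {I\<in>indep_sets V E. v \<in> I}"
  proof (rule set_eqI, rule iffI)
    fix J assume "J \<in> insert v ` ?C"
    then obtain I where I: "I\<in>indep_sets V E" "v \<notin> I" "nbrs V E v \<inter> I = {}" "J = insert v I" by auto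
    have IV: "I \<subseteq> V" and Ii: "\<forall>x\<in>I. \<forall>y\<in>I. \<not> E x y"
      using I(1) unfolding indep_sets_def independent_def by auto
    have nb: "\<not> E v y" if "y \<in> I" for y
      using I(3) that IV unfolding nbrs_def by auto
    have "independent V E J"
      unfolding independent_def I(4)
    proof (intro conjI ballI)
      show "insert v I \<subseteq> V" using IV vV by auto
      fix x y assume x: "x \<in> insert v I" and y: "y \<in> insert v I"
      show "\<not> E x y"
      proof (cases "x = v")
        case True
        then show ?thesis
        proof (cases "y = v")
          case True then show ?thesis using \<open>x = v\<close> irrE by simp
        next
          case False then show ?thesis using \<open>x = v\<close> y nb by simp
        qed
      next
        case False
        then have xI: "x \<in> I" using x by simp
        show ?thesis
        proof (cases "y = v")
          case True then show ?thesis using xI nb symE by blast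
        next
          case False then show ?thesis using xI y Ii by simp
        qed
      qed
    qed
    then show "J \<in> {I\<in>indep_sets V E. v \<in> I}" unfolding indep_sets_def I(4) by auto
  next
    fix J assume J: "J \<in> {I\<in>indep_sets V E. v \<in> I}"
    then have JV: "J \<subseteq> V" and Ji: "\<forall>x\<in>J. \<forall>y\<in>J. \<not> E x y" and vJ: "v \<in> J"
      unfolding indep_sets_def independent_def by auto
    have "J - {v} \<in> ?C"
      using JV Ji vJ unfolding indep_sets_def independent_def nbrs_def by auto
    moreover have "J = insert v (J - {v})" using vJ by auto
    ultimately show "J \<in> insert v ` ?C" by blast
  qed
  have "AA v = (\<Sum>I\<in>insert v ` ?C. lam ^ card I)" unfolding AA_def img ..
  also have "\<dots> = (\<Sum>I\<in>?C. lam ^ card (insert v I))"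
    by (subst sum.reindex[OF inj]) simp
  also have "\<dots> = (\<Sum>I\<in>?C. lam * lam ^ card I)"
  proof (rule sum.cong[OF refl])
    fix I assume "I \<in> ?C"
    then have "finite I" "v \<notin> I" using indep_fin by auto
    then show "lam ^ card (insert v I) = lam * lam ^ card I" by simp
  qed
  also have "\<dots> = lam * CC v" unfolding CC_def by (simp add: sum_distrib_left)
  finally show ?thesis .
qed

lemma B_AC: "BB v = AA v + CC v"
proof -
  have eq: "{I\<in>indep_sets V E. nbrs V E v \<inter> I = {}} =
     {I\<in>indep_sets V E. v \<in> I} \<union> {I\<in>indep_sets V E. v \<notin> I \<and> nbrs V E v \<inter> I = {}}"
    unfolding indep_sets_def independent_def nbrs_def by auto
  show ?thesis unfolding BB_def AA_def CC_def eq
    by (rule sum.union_disjoint) (use fin_indep in auto)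
qed

lemma A_B: assumes "v \<in> V" shows "AA v = lam / (1 + lam) * BB v"
  using A_C[OF assms] B_AC[of v] lpos by (simp add: field_simps)

lemma joint_eq: "joint_expect V E lam f =
   (\<Sum>v\<in>V. \<Sum>I\<in>indep_sets V E. lam ^ card I * f I v) / (partition_fn V E lam * real (card V))"
proof -
  have "joint_expect V E lam f = (\<Sum>I\<in>indep_sets V E. \<Sum>v\<in>V.
          lam ^ card I * f I v / (partition_fn V E lam * real (card V)))"
    unfolding joint_expect_def hc_prob_def by simp
  also have "\<dots> = (\<Sum>v\<in>V. \<Sum>I\<in>indep_sets V E. lam ^ card I * f I v) / (partition_fn V E lam * real (card V))"
    by (subst sum.swap) (simp add: sum_divide_distrib)
  finally show ?thesis .
qed

lemma dc: assumes "I \<subseteq> V" shows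
  "(\<Sum>v\<in>V. real (uncovered_nbrs V E I v)) =
   (\<Sum>u\<in>V. real (degree V E u) * (if nbrs V E u \<inter> I = {} then 1 else 0))"
proof -
  have "(\<Sum>v\<in>V. real (uncovered_nbrs V E I v)) =
        (\<Sum>v\<in>V. \<Sum>u\<in>V. if E v u \<and> nbrs V E u \<inter> I = {} then 1 else 0)"
  proof (rule sum.cong[OF refl])
    fix v
    have "{u \<in> nbrs V E v. nbrs V E u \<inter> I = {}} = {u\<in>V. E v u \<and> nbrs V E u \<inter> I = {}}"
      unfolding nbrs_def by auto
    then show "real (uncovered_nbrs V E I v) = (\<Sum>u\<in>V. if E v u \<and> nbrs V E u \<inter> I = {} then 1 else 0)"
      unfolding uncovered_nbrs_def using finV by (simp add: sum.inter_filter[symmetric])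
  qed
  also have "\<dots> = (\<Sum>u\<in>V. \<Sum>v\<in>V. if E u v \<and> nbrs V E u \<inter> I = {} then 1 else 0)"
  proof -
    have ee: "\<And>i j. E i j = E j i" using symE by blast
    show ?thesis by (subst sum.swap) (simp only: ee)
  qed
  also have "\<dots> = (\<Sum>u\<in>V. real (degree V E u) * (if nbrs V E u \<inter> I = {} then 1 else 0))"
  proof (rule sum.cong[OF refl])
    fix u
    have "real (degree V E u) = (\<Sum>v\<in>V. if E u v then 1 else 0)"
      unfolding degree_def nbrs_def using finV by (simp add: sum.inter_filter[symmetric])
    then show "(\<Sum>v\<in>V. if E u v \<and> nbrs V E u \<inter> I = {} then 1 else 0) =
          real (degree V E u) * (if nbrs V E u \<inter> I = {} then 1 else 0)"
      by (simp add: sum_distrib_right[symmetric])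
  qed
  finally show ?thesis .
qed

lemma JZ_eq: "joint_expect V E lam (\<lambda>I v. real (uncovered_nbrs V E I v)) =
   (\<Sum>u\<in>V. real (degree V E u) * BB u) / (partition_fn V E lam * real (card V))"
proof -
  have "(\<Sum>v\<in>V. \<Sum>I\<in>indep_sets V E. lam ^ card I * real (uncovered_nbrs V E I v))
     = (\<Sum>I\<in>indep_sets V E. lam ^ card I * (\<Sum>v\<in>V. real (uncovered_nbrs V E I v)))"
    by (subst sum.swap) (simp add: sum_distrib_left)
  also have "\<dots> = (\<Sum>I\<in>indep_sets V E. \<Sum>u\<in>V. real (degree V E u) *
        (if nbrs V E u \<inter> I = {} then lam ^ card I else 0))"
  proof (rule sum.cong[OF refl])
    fix I assume "I \<in> indep_sets V E"
    then have "I \<subseteq> V" using indep_fin by auto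
    then show "lam ^ card I * (\<Sum>v\<in>V. real (uncovered_nbrs V E I v)) =
      (\<Sum>u\<in>V. real (degree V E u) * (if nbrs V E u \<inter> I = {} then lam ^ card I else 0))"
      by (simp add: dc sum_distrib_left, intro sum.cong refl, simp)
  qed
  also have "\<dots> = (\<Sum>u\<in>V. real (degree V E u) * BB u)"
    unfolding BB_def using fin_indep
    by (subst sum.swap) (simp add: sum_distrib_left sum.inter_filter)
  finally show ?thesis by (simp add: joint_eq)
qed


lemma tri_nb: assumes T: "triangle_free V E" and "u \<in> nbrs V E v" "w \<in> nbrs V E v"
  shows "\<not> E u w"
proof
  assume "E u w"
  moreover have "E v u" "E v w" "u \<in> V" "w \<in> V" using assms(2,3) unfolding nbrs_def by auto
  moreover have "v \<in> V" using inV \<open>E v u\<close> by blast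
  ultimately show False using T unfolding triangle_free_def by blast
qed

lemma B_eq: assumes T: "triangle_free V E"
  shows "BB v = (\<Sum>I\<in>indep_sets V E. lam ^ card I / (1 + lam) ^ uncovered_nbrs V E I v)"
proof -
  define N where "N = nbrs V E v"
  define JJ where "JJ = {J\<in>indep_sets V E. N \<inter> J = {}}"
  define U where "U J = {u\<in>N. nbrs V E u \<inter> J = {}}" for J
  have NV: "N \<subseteq> V" unfolding N_def nbrs_def by auto
  have finU: "finite (U J)" for J using NV finV unfolding U_def by (auto intro: finite_subset)
  have Zeq: "uncovered_nbrs V E I v = card (U (I - N))" for I
  proof -
    have "{u \<in> nbrs V E v. nbrs V E u \<inter> I = {}} = U (I - N)"
    proof -
      have "nbrs V E u \<inter> I = nbrs V E u \<inter> (I - N)" if "u \<in> N" for u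
        using tri_nb[OF T, of u v] that unfolding N_def nbrs_def by auto
      then show ?thesis unfolding U_def N_def by auto
    qed
    then show ?thesis unfolding uncovered_nbrs_def by simp
  qed
  let ?g = "\<lambda>I. lam ^ card I / (1 + lam) ^ uncovered_nbrs V E I v"
  have "(\<Sum>I\<in>indep_sets V E. ?g I) = (\<Sum>J\<in>JJ. \<Sum>I\<in>{I. I \<in> indep_sets V E \<and> I - N = J}. ?g I)"
  proof (rule sum.group[symmetric, OF fin_indep])
    show "finite JJ" unfolding JJ_def using fin_indep by auto
    show "(\<lambda>I. I - N) ` indep_sets V E \<subseteq> JJ"
      unfolding JJ_def indep_sets_def independent_def by auto
  qed
  also have "\<dots> = (\<Sum>J\<in>JJ. lam ^ card J)"
  proof (rule sum.cong[OF refl])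
    fix J assume J: "J \<in> JJ"
    then have JV: "J \<subseteq> V" and Ji: "\<forall>x\<in>J. \<forall>y\<in>J. \<not> E x y" and JN: "N \<inter> J = {}"
      and finJ: "finite J"
      unfolding JJ_def indep_sets_def independent_def using finV finite_subset by auto
    have UN: "U J \<subseteq> N" unfolding U_def by auto
    have inj: "inj_on (\<lambda>S. J \<union> S) (Pow (U J))"
    proof (rule inj_onI)
      fix x y assume "x \<in> Pow (U J)" "y \<in> Pow (U J)" "J \<union> x = J \<union> y"
      then have "x \<subseteq> N" "y \<subseteq> N" "(J \<union> x) \<inter> N = (J \<union> y) \<inter> N" using UN by auto
      then show "x = y" using JN by blast
    qed
    have img: "(\<lambda>S. J \<union> S) ` Pow (U J) = {I. I \<in> indep_sets V E \<and> I - N = J}"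
    proof (rule set_eqI, rule iffI)
      fix I assume "I \<in> (\<lambda>S. J \<union> S) ` Pow (U J)"
      then obtain S where S: "S \<subseteq> U J" "I = J \<union> S" by auto
      have SN: "S \<subseteq> N" using S UN by auto
      have "independent V E I" unfolding independent_def S(2)
      proof (intro conjI ballI)
        show "J \<union> S \<subseteq> V" using JV SN NV by auto
        fix x y assume x: "x \<in> J \<union> S" and y: "y \<in> J \<union> S"
        show "\<not> E x y"
        proof
          assume e: "E x y"
          then have xyV: "x \<in> V" "y \<in> V" using inV by auto
          show False
          proof (cases "x \<in> J")
            case True
            show False
            proof (cases "y \<in> J")
              case True then show False using Ji \<open>x \<in> J\<close> e by blast
            next
              case False then have "y \<in> U J" using y S by auto
              then have "nbrs V E y \<inter> J = {}" unfolding U_def by auto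
              then show False using symE[OF e] xyV \<open>x \<in> J\<close> unfolding nbrs_def by auto
            qed
          next
            case False then have xU: "x \<in> U J" using x S by auto
            show False
            proof (cases "y \<in> J")
              case True
              have "nbrs V E x \<inter> J = {}" using xU unfolding U_def by auto
              then show False using e xyV True unfolding nbrs_def by auto
            next
              case False then have "y \<in> U J" using y S by auto
              then show False using xU UN tri_nb[OF T, of x v y] e unfolding N_def by auto
            qed
          qed
        qed
      qed
      moreover have "I - N = J" using S(2) SN JN by auto
      ultimately show "I \<in> {I. I \<in> indep_sets V E \<and> I - N = J}" unfolding indep_sets_def by auto
    next
      fix I assume "I \<in> {I. I \<in> indep_sets V E \<and> I - N = J}"
      then have I: "independent V E I" "I - N = J" unfolding indep_sets_def by auto
      have "I \<inter> N \<subseteq> U J"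
        using I unfolding U_def independent_def nbrs_def by auto
      moreover have "I = J \<union> (I \<inter> N)" using I(2) by auto
      ultimately show "I \<in> (\<lambda>S. J \<union> S) ` Pow (U J)" by blast
    qed
    have "(\<Sum>I\<in>{I. I \<in> indep_sets V E \<and> I - N = J}. ?g I) = (\<Sum>S\<in>Pow (U J). ?g (J \<union> S))"
      unfolding img[symmetric] by (subst sum.reindex[OF inj]) simp
    also have "\<dots> = (\<Sum>S\<in>Pow (U J). lam ^ card J * lam ^ card S / (1 + lam) ^ card (U J))"
    proof (rule sum.cong[OF refl])
      fix S assume "S \<in> Pow (U J)"
      then have SN: "S \<subseteq> N" using UN by auto
      then have "finite S" using finU \<open>S \<in> Pow (U J)\<close> by (auto intro: finite_subset)
      moreover have "J \<inter> S = {}" using SN JN by auto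
      ultimately have "card (J \<union> S) = card J + card S" using finJ by (simp add: card_Un_disjoint)
      moreover have "J \<union> S - N = J" using SN JN by auto
      ultimately show "?g (J \<union> S) = lam ^ card J * lam ^ card S / (1 + lam) ^ card (U J)"
        by (simp add: Zeq power_add)
    qed
    also have "\<dots> = lam ^ card J * (\<Sum>S\<in>Pow (U J). lam ^ card S) / (1 + lam) ^ card (U J)"
      by (simp add: sum_divide_distrib sum_distrib_left)
    also have "\<dots> = lam ^ card J"
      using sum_pow_card[OF finU[of J], of lam] lpos by simp
    finally show "(\<Sum>I\<in>{I. I \<in> indep_sets V E \<and> I - N = J}. ?g I) = lam ^ card J" .
  qed
  also have "\<dots> = BB v" unfolding BB_def JJ_def N_def by (simp add: Int_commute)
  finally show ?thesis by simp
qed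

end

theorem mainTheorem7:
  fixes V :: "'a set" and E :: "'a \<Rightarrow> 'a \<Rightarrow> bool" and lam :: real
  assumes "simple_graph V E" and "triangle_free V E" and "card V \<ge> 1" and "lam > 0"
  shows "alpha_bar V E lam / real (card V) =
           lam / (1 + lam) *
           joint_expect V E lam (\<lambda>I v. 1 / (1 + lam) ^ uncovered_nbrs V E I v)
         \<and> (\<forall>d. max_degree V E = d \<and> d \<ge> 1 \<longrightarrow>
           alpha_bar V E lam / real (card V) \<ge>
           lam / (1 + lam) *
           (joint_expect V E lam (\<lambda>I v. real (uncovered_nbrs V E I v)) / real d))
         \<and> (\<forall>d. regular V E d \<and> d \<ge> 1 \<longrightarrow>
           alpha_bar V E lam / real (card V) =
           lam / (1 + lam) *
           (joint_expect V E lam (\<lambda>I v. real (uncovered_nbrs V E I v)) / real d))"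
proof -
  note G = assms(1) and T = assms(2) and lpos = assms(4)
  define P where "P = partition_fn V E lam"
  define n where "n = real (card V)"
  have Pp: "P > 0" unfolding P_def using P_pos[OF G lpos] .
  have np: "n > 0" unfolding n_def using assms(3) by simp
  let ?A = "AA V E lam" and ?B = "BB V E lam"
  have hA: "(\<Sum>v\<in>V. ?A v) = (\<Sum>v\<in>V. lam / (1 + lam) * ?B v)"
    by (rule sum.cong[OF refl]) (rule A_B[OF G lpos])
  have al: "alpha_bar V E lam / n = lam / (1 + lam) * ((\<Sum>v\<in>V. ?B v) / (P * n))"
  proof -
    have "alpha_bar V E lam / n = (\<Sum>v\<in>V. ?A v) / P / n"
      using alpha_eq[OF G lpos] unfolding P_def by simp
    also have "\<dots> = lam / (1 + lam) * (\<Sum>v\<in>V. ?B v) / P / n"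
      unfolding hA by (simp only: sum_distrib_left)
    also have "\<dots> = lam / (1 + lam) * ((\<Sum>v\<in>V. ?B v) / (P * n))"
      by simp
    finally show ?thesis .
  qed
  have e1: "(\<Sum>v\<in>V. ?B v) = (\<Sum>v\<in>V. \<Sum>I\<in>indep_sets V E. lam ^ card I * (1 / (1 + lam) ^ uncovered_nbrs V E I v))"
    by (rule sum.cong[OF refl]) (simp add: B_eq[OF G lpos T])
  have p1: "alpha_bar V E lam / n =
           lam / (1 + lam) * joint_expect V E lam (\<lambda>I v. 1 / (1 + lam) ^ uncovered_nbrs V E I v)"
  proof -
    have j1: "joint_expect V E lam (\<lambda>I v. 1 / (1 + lam) ^ uncovered_nbrs V E I v) = (\<Sum>v\<in>V. ?B v) / (P * n)"
      unfolding joint_eq[OF G lpos] e1 P_def n_def by (rule refl)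
    show ?thesis unfolding al j1 by (rule refl)
  qed
  have JZ: "joint_expect V E lam (\<lambda>I v. real (uncovered_nbrs V E I v)) =
      (\<Sum>u\<in>V. real (degree V E u) * ?B u) / (P * n)"
    using JZ_eq[OF G lpos] unfolding P_def n_def .
  have Bnn: "?B u \<ge> 0" for u unfolding BB_def[OF G lpos] using lpos by (intro sum_nonneg) auto
  have fl: "lam / (1 + lam) > 0" using lpos by simp
  have p2: "alpha_bar V E lam / n \<ge> lam / (1 + lam) *
      (joint_expect V E lam (\<lambda>I v. real (uncovered_nbrs V E I v)) / real d)"
    if d: "max_degree V E = d" "d \<ge> 1" for d
  proof -
    have "(\<Sum>u\<in>V. real (degree V E u) * ?B u) \<le> (\<Sum>u\<in>V. real d * ?B u)"
    proof (rule sum_mono)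
      fix u assume "u \<in> V"
      then have "degree V E u \<le> d" using d finite_imageI[OF finV[OF G lpos]]
        unfolding max_degree_def by (metis Max_ge imageI)
      then show "real (degree V E u) * ?B u \<le> real d * ?B u" using Bnn[of u]
        by (intro mult_right_mono) auto
    qed
    then have "(\<Sum>u\<in>V. real (degree V E u) * ?B u) / real d \<le> (\<Sum>u\<in>V. ?B u)"
      using d by (simp add: sum_distrib_left[symmetric] divide_le_eq mult.commute)
    then have "(\<Sum>u\<in>V. real (degree V E u) * ?B u) / (P * n) / real d \<le> (\<Sum>u\<in>V. ?B u) / (P * n)"
      using Pp np by (simp add: divide_right_mono field_simps)
    then show ?thesis unfolding al JZ using fl by (intro mult_left_mono) auto
  qed
  have p3: "alpha_bar V E lam / n = lam / (1 + lam) *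
      (joint_expect V E lam (\<lambda>I v. real (uncovered_nbrs V E I v)) / real d)"
    if d: "regular V E d" "d \<ge> 1" for d
  proof -
    have "(\<Sum>u\<in>V. real (degree V E u) * ?B u) = (\<Sum>u\<in>V. real d * ?B u)"
      using d unfolding regular_def by simp
    then have "(\<Sum>u\<in>V. real (degree V E u) * ?B u) / real d = (\<Sum>u\<in>V. ?B u)"
      using d by (simp add: sum_distrib_left[symmetric])
    moreover have "(\<Sum>u\<in>V. real (degree V E u) * ?B u) / (P * n) / real d
        = ((\<Sum>u\<in>V. real (degree V E u) * ?B u) / real d) / (P * n)" by simp
    ultimately have "(\<Sum>u\<in>V. real (degree V E u) * ?B u) / (P * n) / real d
        = (\<Sum>u\<in>V. ?B u) / (P * n)" by simp
    then show ?thesis unfolding al JZ by simp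
  qed
  show ?thesis using p1 p2 p3 unfolding n_def[symmetric] by blast
qed

end
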